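(* Let $G$ be a tree on $k\ge 2$ vertices and $n\ge 1$. If $G$ has a perfect matching, then the number of perfect matchings of $\Gamma^G_n$ (with loops ignored and parallel edges counted as distinct edges) is $$2^{\frac{k}{2(k-1)}\left(k^n-2k^{n-1}+1\right)} ;$$ if $G$ has no perfect matching, then $\Gamma^G_n$ has no perfect matching.
   Context: Let $G=(V,E)$ be a finite tree with vertex set $V$ of size $k$, and fix an orientation of each edge, so that each edge becomes an ordered pair $e=(s,t)$. Each oriented edge $e=(s,t)$ acts on the set $V^*$ of finite words over the alphabet $V$ by the recursive rule: $e(\emptyset)=\emptyset$, $e(sw)=t\,e(w)$, $e(tw)=sw$, and $e(xw)=xw$ for $x\in V\setminus\{s,t\}$ (words are read left to right, $w\in V^*$). This action preserves word length. For $n\ge 1$, the Schreier graph $\Gamma_n^G$ is the multigraph with vertex set $V^n$ having, for each $u\in V^n$ and each oriented edge $e$ of $G$, one edge joining $u$ and $e(u)$, labelled $e$ (a loop if $e(u)=u$). A perfect matching of a graph is a set $M$ of non-loop edges such that every vertex is incident to exactly one edge of $M$. *)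

theory Defs
  imports Complex_Main
begin

(* Each undirected edge of the tree appears in exactly one
   orientation. *)
definition oriented_tree :: "'v set \<Rightarrow> ('v \<times> 'v) set \<Rightarrow> bool" where
  "oriented_tree V E \<longleftrightarrow>
     finite V \<and> E \<subseteq> V \<times> V \<and>
     (\<forall>(s,t)\<in>E. s \<noteq> t) \<and>
     (\<forall>(s,t)\<in>E. (t,s) \<notin> E) \<and>
     (\<forall>x\<in>V. \<forall>y\<in>V. (x,y) \<in> (E \<union> E\<inverse>)\<^sup>*) \<and>
     card E = card V - 1"

definition tree_has_perfect_matching :: "'v set \<Rightarrow> ('v \<times> 'v) set \<Rightarrow> bool" where
  "tree_has_perfect_matching V E \<longleftrightarrow>
     (\<exists>M\<subseteq>E. \<forall>v\<in>V. card {e\<in>M. v = fst e \<or> v = snd e} = 1)"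

fun act :: "'v \<times> 'v \<Rightarrow> 'v list \<Rightarrow> 'v list" where
  "act e [] = []"
| "act (s,t) (x # w) =
     (if x = s then t # act (s,t) w else if x = t then s # w else x # w)"

definition words :: "'v set \<Rightarrow> nat \<Rightarrow> 'v list set" where
  "words V n = {w. set w \<subseteq> V \<and> length w = n}"

(* edges of Gamma_n^G are indexed by pairs (u,e), u \<in> V^n, e \<in> E;
   the edge (u,e) joins u and act e u (a loop iff act e u = u) *)
definition schreier_edges :: "'v set \<Rightarrow> ('v \<times> 'v) set \<Rightarrow> nat \<Rightarrow> ('v list \<times> ('v \<times> 'v)) set" where
  "schreier_edges V E n = words V n \<times> E"

definition endpoints :: "'v list \<times> ('v \<times> 'v) \<Rightarrow> 'v list set" where
  "endpoints ue = {fst ue, act (snd ue) (fst ue)}"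

definition schreier_perfect_matching ::
  "'v set \<Rightarrow> ('v \<times> 'v) set \<Rightarrow> nat \<Rightarrow> ('v list \<times> ('v \<times> 'v)) set \<Rightarrow> bool" where
  "schreier_perfect_matching V E n M \<longleftrightarrow>
     M \<subseteq> schreier_edges V E n \<and>
     (\<forall>ue\<in>M. act (snd ue) (fst ue) \<noteq> fst ue) \<and>
     (\<forall>w\<in>words V n. card {ue\<in>M. w \<in> endpoints ue} = 1)"

end

theory Submission
  imports Defs "HOL-Library.FuncSet"
begin


lemma act_length[simp]: "length (act (s,t) w) = length w"
  by (induction w) auto

lemma act_Nil_iff[simp]: "act (s,t) w = [] \<longleftrightarrow> w = []"
  by (cases w) auto

lemma act_set: "set w \<subseteq> V \<Longrightarrow> s \<in> V \<Longrightarrow> t \<in> V \<Longrightarrow> set (act (s,t) w) \<subseteq> V"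
  by (induction w) auto

lemma act_words: "w \<in> words V n \<Longrightarrow> s \<in> V \<Longrightarrow> t \<in> V \<Longrightarrow> act (s,t) w \<in> words V n"
  unfolding words_def using act_set[of w V s t] by auto

lemma act_fix_iff: "s \<noteq> t \<Longrightarrow> act (s,t) w = w \<longleftrightarrow> (w = [] \<or> hd w \<notin> {s,t})"
  by (cases w) auto

lemma act_hd: "w \<noteq> [] \<Longrightarrow> hd w \<in> {s,t} \<Longrightarrow> s \<noteq> t \<Longrightarrow>
   hd (act (s,t) w) = (if hd w = s then t else s)"
  by (cases w) auto

lemma act_inj: "s \<noteq> t \<Longrightarrow> act (s,t) u = act (s,t) v \<Longrightarrow> u = v"
proof (induction u arbitrary: v)
  case Nil then show ?case by (metis act_Nil_iff)
next
  case (Cons x u)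
  then obtain y v' where v: "v = y # v'" by (cases v) (auto split: if_splits)
  show ?case using Cons v by (auto split: if_splits)
qed

fun nrm :: "'v \<Rightarrow> 'v \<Rightarrow> 'v list \<Rightarrow> 'v list" where
  "nrm s t [] = []"
| "nrm s t (x # w) = (if x = s \<or> x = t then t # nrm s t w else x # w)"

lemma nrm_length[simp]: "length (nrm s t w) = length w"
  by (induction w) auto

lemma nrm_Nil_iff[simp]: "nrm s t w = [] \<longleftrightarrow> w = []"
  by (cases w) auto

lemma nrm_idem[simp]: "nrm s t (nrm s t w) = nrm s t w"
  by (induction w) auto

lemma nrm_act[simp]: "nrm s t (act (s,t) u) = nrm s t u"
  by (induction u) auto

lemma nrm_set: "set w \<subseteq> V \<Longrightarrow> t \<in> V \<Longrightarrow> set (nrm s t w) \<subseteq> V"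
  by (induction w) auto

lemma act_act_cons: "x \<in> {s,t} \<Longrightarrow> s \<noteq> t \<Longrightarrow> act (s,t) (act (s,t) (x # w)) = x # act (s,t) w"
  by auto

lemma act_pow2: "x \<in> {s,t} \<Longrightarrow> s \<noteq> t \<Longrightarrow> (act (s,t) ^^ (2*i)) (x # w) = x # (act (s,t) ^^ i) w"
proof (induction i)
  case 0 then show ?case by simp
next
  case (Suc i)
  have "(act (s,t) ^^ (2 * Suc i)) (x # w) = act (s,t) (act (s,t) ((act (s,t) ^^ (2*i)) (x # w)))"
    by (simp add: numeral_2_eq_2)
  also have "\<dots> = act (s,t) (act (s,t) (x # (act (s,t) ^^ i) w))" using Suc by simp
  also have "\<dots> = x # (act (s,t) ^^ Suc i) w" by (subst act_act_cons[OF Suc.prems]) simp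
  finally show ?case .
qed

lemma nrm_trans: "s \<noteq> t \<Longrightarrow> nrm s t u' = nrm s t u \<Longrightarrow> \<exists>i. (act (s,t) ^^ i) u' = u"
proof (induction u arbitrary: u')
  case Nil then show ?case by (intro exI[of _ 0]) simp
next
  case (Cons x w)
  then obtain y w' where u': "u' = y # w'" by (cases u') (auto split: if_splits)
  show ?case
  proof (cases "x = s \<or> x = t")
    case False
    then have "y \<noteq> s \<and> y \<noteq> t" using Cons.prems u' by (auto split: if_splits)
    then show ?thesis using Cons.prems u' False by (intro exI[of _ 0]) auto
  next
    case True
    then have y: "y = s \<or> y = t" and nw: "nrm s t w' = nrm s t w"
      using Cons.prems u' by (auto split: if_splits)
    show ?thesis
    proof (cases "y = x")
      case True
      obtain i where "(act (s,t) ^^ i) w' = w" using Cons.IH[OF Cons.prems(1) nw] by blast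
      then show ?thesis using act_pow2[of y s t i w'] y Cons.prems(1) u' True
        by (intro exI[of _ "2*i"]) auto
    next
      case False
      show ?thesis
      proof (cases "y = t")
        case True
        then have xs: "x = s" using False \<open>x = s \<or> x = t\<close> by auto
        obtain i where "(act (s,t) ^^ i) w' = w" using Cons.IH[OF Cons.prems(1) nw] by blast
        then have "(act (s,t) ^^ (2*i)) u' = t # w" using act_pow2[of y s t i w'] y Cons.prems(1) u' True
          by auto
        then have "(act (s,t) ^^ Suc (2*i)) u' = s # w" using Cons.prems(1) by simp
        then show ?thesis using xs by blast
      next
        case False
        then have ys: "y = s" and xt: "x = t" using y \<open>y \<noteq> x\<close> \<open>x = s \<or> x = t\<close> by auto
        have a1: "act (s,t) u' = t # act (s,t) w'" using u' ys by simp
        have "nrm s t (act (s,t) w') = nrm s t w" using nw by simp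
        then obtain i where "(act (s,t) ^^ i) (act (s,t) w') = w" using Cons.IH[OF Cons.prems(1)] by blast
        then have "(act (s,t) ^^ (2*i)) (act (s,t) u') = t # w" using act_pow2[of t s t i] a1 Cons.prems(1)
          by auto
        then have "(act (s,t) ^^ Suc (2*i)) u' = t # w" by (simp add: funpow_Suc_right del: funpow.simps)
        then show ?thesis using xt by blast
      qed
    qed
  qed
qed



lemma words_finite: "finite V \<Longrightarrow> finite (words V n)"
  unfolding words_def by (rule finite_lists_length_eq)

lemma words_card: "finite V \<Longrightarrow> card (words V n) = card V ^ n"
  unfolding words_def by (rule card_lists_length_eq)

definition Sset :: "'v set \<Rightarrow> nat \<Rightarrow> 'v \<Rightarrow> 'v \<Rightarrow> 'v list set" where
  "Sset V n s t = {u \<in> words V n. u \<noteq> [] \<and> hd u \<in> {s,t}}"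

definition alt :: "'v set \<Rightarrow> nat \<Rightarrow> 'v \<Rightarrow> 'v \<Rightarrow> 'v list set \<Rightarrow> bool" where
  "alt V n s t A \<longleftrightarrow> A \<subseteq> Sset V n s t \<and> (\<forall>u\<in>Sset V n s t. act (s,t) u \<in> A \<longleftrightarrow> u \<notin> A)"

definition Rep :: "'v set \<Rightarrow> nat \<Rightarrow> 'v \<Rightarrow> 'v \<Rightarrow> 'v list set" where
  "Rep V n s t = {u \<in> Sset V n s t. nrm s t u = u}"

definition Fixw :: "'v set \<Rightarrow> nat \<Rightarrow> 'v \<Rightarrow> 'v \<Rightarrow> 'v list set" where
  "Fixw V m s t = {w \<in> words V m. nrm s t w = w}"

lemma S_act: "u \<in> Sset V n s t \<Longrightarrow> s \<in> V \<Longrightarrow> t \<in> V \<Longrightarrow> s \<noteq> t \<Longrightarrow> act (s,t) u \<in> Sset V n s t"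
  unfolding Sset_def using act_words[of u V n s t] act_hd[of u s t] by auto

lemma S_act_hd: "u \<in> Sset V n s t \<Longrightarrow> s \<noteq> t \<Longrightarrow> (hd (act (s,t) u) = t) \<longleftrightarrow> hd u \<noteq> t"
  unfolding Sset_def using act_hd[of u s t] by auto

lemma S_nrm: "u \<in> Sset V n s t \<Longrightarrow> t \<in> V \<Longrightarrow> nrm s t u \<in> Sset V n s t \<and> hd (nrm s t u) = t"
  unfolding Sset_def words_def using nrm_set[of u V t s]
  by (cases u) auto

lemma S_finite: "finite V \<Longrightarrow> finite (Sset V n s t)"
  unfolding Sset_def by (rule finite_subset[OF _ words_finite]) auto

lemma alt_char:
  assumes "alt V n s t A" "u \<in> Sset V n s t" "s \<in> V" "t \<in> V" "s \<noteq> t"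
  shows "u \<in> A \<longleftrightarrow> ((hd u = t) \<longleftrightarrow> nrm s t u \<in> A)"
proof -
  define Q where "Q = (\<lambda>u. (u \<in> A) = (hd u = t))"
  have step: "v \<in> Sset V n s t \<Longrightarrow> Q (act (s,t) v) = Q v" for v
    using assms(1) S_act_hd[of v V n s t] assms(5) unfolding alt_def Q_def by auto
  have pow: "v \<in> Sset V n s t \<Longrightarrow> Q ((act (s,t) ^^ i) v) = Q v \<and> (act (s,t) ^^ i) v \<in> Sset V n s t" for v i
  proof (induction i)
    case 0 then show ?case by simp
  next
    case (Suc i) then show ?case using step S_act[of "(act (s,t)^^i) v" V n s t] assms(3-5) by simp
  qed
  obtain i where i: "(act (s,t) ^^ i) (nrm s t u) = u" using nrm_trans[OF assms(5), of "nrm s t u" u] by auto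
  have "Q u = Q (nrm s t u)" using pow[of "nrm s t u" i] i S_nrm[OF assms(2,4)] by simp
  then show ?thesis using S_nrm[OF assms(2,4)] unfolding Q_def by auto
qed

lemma alt_card:
  assumes "finite V" "s \<in> V" "t \<in> V" "s \<noteq> t"
  shows "card {A. alt V n s t A} = 2 ^ card (Rep V n s t)"
proof -
  let ?S = "Sset V n s t" and ?R = "Rep V n s t"
  let ?f = "\<lambda>A. A \<inter> ?R" and ?g = "\<lambda>B. {u\<in>?S. (hd u = t) = (nrm s t u \<in> B)}"
  have RS: "?R \<subseteq> ?S" unfolding Rep_def by auto
  have "bij_betw ?f {A. alt V n s t A} (Pow ?R)"
  proof (rule bij_betw_byWitness)
    show "\<forall>A\<in>{A. alt V n s t A}. ?g (?f A) = A"
    proof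
      fix A assume A: "A \<in> {A. alt V n s t A}"
      then have AS: "A \<subseteq> ?S" unfolding alt_def by auto
      show "?g (?f A) = A"
      proof (intro set_eqI iffI)
        fix u assume "u \<in> ?g (?f A)"
        then show "u \<in> A" using alt_char[of V n s t A u] A assms S_nrm[of u V n s t]
          unfolding Rep_def by auto
      next
        fix u assume "u \<in> A"
        then show "u \<in> ?g (?f A)" using alt_char[of V n s t A u] A AS assms S_nrm[of u V n s t]
          unfolding Rep_def by auto
      qed
    qed
    show "\<forall>B\<in>Pow ?R. ?f (?g B) = B"
    proof
      fix B assume B: "B \<in> Pow ?R"
      have "u \<in> ?R \<Longrightarrow> hd u = t" for u using S_nrm[of u V n s t] assms unfolding Rep_def by auto
      then have hR: "u \<in> ?R \<Longrightarrow> hd u = t \<and> nrm s t u = u \<and> u \<in> ?S" for u unfolding Rep_def by auto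
      show "?f (?g B) = B"
      proof (intro set_eqI iffI)
        fix u assume "u \<in> ?f (?g B)" then show "u \<in> B" using hR[of u] by auto
      next
        fix u assume "u \<in> B" then show "u \<in> ?f (?g B)" using hR[of u] B by auto
      qed
    qed
    show "?f ` {A. alt V n s t A} \<subseteq> Pow ?R" by auto
    show "?g ` Pow ?R \<subseteq> {A. alt V n s t A}"
    proof clarify
      fix B assume "B \<subseteq> ?R"
      show "alt V n s t (?g B)" unfolding alt_def
        using S_act[of _ V n s t] S_act_hd[of _ V n s t] assms by auto
    qed
  qed
  then have "card {A. alt V n s t A} = card (Pow ?R)" by (rule bij_betw_same_card)
  also have "\<dots> = 2 ^ card ?R"
    using card_Pow finite_subset[OF RS S_finite[OF assms(1)]] by blast
  finally show ?thesis .
qed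

lemma Rep_eq: "n \<ge> 1 \<Longrightarrow> t \<in> V \<Longrightarrow> Rep V n s t = (\<lambda>w. t # w) ` Fixw V (n-1) s t"
proof (intro set_eqI iffI)
  fix u assume "n \<ge> 1" "u \<in> Rep V n s t"
  then obtain x w where u: "u = x # w" unfolding Rep_def Sset_def by (cases u) auto
  then show "u \<in> (\<lambda>w. t # w) ` Fixw V (n-1) s t"
    using \<open>u \<in> Rep V n s t\<close> unfolding Rep_def Sset_def Fixw_def words_def
    by (auto split: if_splits)
next
  fix u assume "n \<ge> 1" "t \<in> V" "u \<in> (\<lambda>w. t # w) ` Fixw V (n-1) s t"
  then show "u \<in> Rep V n s t" unfolding Rep_def Sset_def Fixw_def words_def by auto
qed

lemma Rep_card: "n \<ge> 1 \<Longrightarrow> t \<in> V \<Longrightarrow> card (Rep V n s t) = card (Fixw V (n-1) s t)"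
  using Rep_eq[of n t V s] by (simp add: card_image)

lemma Fixw_Suc:
  assumes "t \<in> V"
  shows "Fixw V (Suc m) s t = ((\<lambda>(x,w). x # w) ` ((V - {s,t}) \<times> words V m)) \<union> ((\<lambda>w. t # w) ` Fixw V m s t)"
proof (intro set_eqI iffI)
  fix u assume "u \<in> Fixw V (Suc m) s t"
  then obtain x w where u: "u = x # w" unfolding Fixw_def words_def by (cases u) auto
  then show "u \<in> ((\<lambda>(x,w). x # w) ` ((V - {s,t}) \<times> words V m)) \<union> ((\<lambda>w. t # w) ` Fixw V m s t)"
    using \<open>u \<in> Fixw V (Suc m) s t\<close> unfolding Fixw_def words_def
    by (auto split: if_splits)
next
  fix u assume "u \<in> ((\<lambda>(x,w). x # w) ` ((V - {s,t}) \<times> words V m)) \<union> ((\<lambda>w. t # w) ` Fixw V m s t)"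
  then show "u \<in> Fixw V (Suc m) s t" using assms unfolding Fixw_def words_def by auto
qed

lemma Fixw_card_Suc:
  assumes "finite V" "s \<in> V" "t \<in> V" "s \<noteq> t"
  shows "card (Fixw V (Suc m) s t) = (card V - 2) * card V ^ m + card (Fixw V m s t)"
proof -
  have fin1: "finite ((\<lambda>(x,w). x # w) ` ((V - {s,t}) \<times> words V m))"
    using assms(1) words_finite by auto
  have fin2: "finite ((\<lambda>w. t # w) ` Fixw V m s t)"
    using words_finite[OF assms(1), of m] unfolding Fixw_def by auto
  have disj: "((\<lambda>(x,w). x # w) ` ((V - {s,t}) \<times> words V m)) \<inter> ((\<lambda>w. t # w) ` Fixw V m s t) = {}"
    by auto
  have c1: "card ((\<lambda>(x,w). x # w) ` ((V - {s,t}) \<times> words V m)) = (card V - 2) * card V ^ m"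
  proof -
    have "inj_on (\<lambda>(x,w). x # w) ((V - {s,t}) \<times> words V m)" by (auto simp: inj_on_def)
    then have "card ((\<lambda>(x,w). x # w) ` ((V - {s,t}) \<times> words V m)) = card (V - {s,t}) * card (words V m)"
      by (simp add: card_image card_cartesian_product)
    also have "card (V - {s,t}) = card V - 2" using assms by (simp add: card_Diff_subset)
    finally show ?thesis using words_card[OF assms(1)] by simp
  qed
  have c2: "card ((\<lambda>w. t # w) ` Fixw V m s t) = card (Fixw V m s t)" by (simp add: card_image)
  show ?thesis unfolding Fixw_Suc[OF assms(3)] using card_Un_disjoint[OF fin1 fin2 disj] c1 c2 by simp
qed

lemma Fixw_card_real:
  assumes "finite V" "s \<in> V" "t \<in> V" "s \<noteq> t"
  shows "real (card (Fixw V m s t)) * (real (card V) - 1) = real (card V) ^ (m+1) - 2 * real (card V) ^ m + 1"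
proof (induction m)
  case 0
  have "Fixw V 0 s t = {[]}" unfolding Fixw_def words_def by auto
  then show ?case by simp
next
  case (Suc m)
  have k2: "card V \<ge> 2" using assms
    by (metis card_2_iff finite_subset empty_subsetI insert_subset card_mono)
  have eq: "real (card (Fixw V (Suc m) s t)) = (real (card V) - 2) * real (card V) ^ m + real (card (Fixw V m s t))"
    using Fixw_card_Suc[OF assms, of m] k2 by (simp add: of_nat_diff)
  show ?case unfolding eq using Suc by (simp add: algebra_simps)
qed



definition inc :: "('v \<times> 'v) set \<Rightarrow> 'v \<Rightarrow> ('v \<times> 'v) set" where
  "inc E v = {e\<in>E. v = fst e \<or> v = snd e}"

lemma cross_edge: "(a,b) \<in> R\<^sup>* \<Longrightarrow> a \<in> W \<Longrightarrow> b \<notin> W \<Longrightarrow> \<exists>p q. (p,q) \<in> R \<and> p \<in> W \<and> q \<notin> W"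
proof (induction rule: rtrancl_induct)
  case base then show ?case by simp
next
  case (step y z) then show ?case by (cases "y \<in> W") auto
qed

lemma cut_count:
  assumes fin: "finite V" and EV: "E \<subseteq> V \<times> V"
    and conn: "\<forall>x\<in>V. \<forall>y\<in>V. (x,y) \<in> (E \<union> E\<inverse>)\<^sup>*"
    and UV: "U \<subseteq> V" and Une: "U \<noteq> {}" and DE: "D \<subseteq> E"
    and DU: "\<forall>e\<in>D. fst e \<in> U \<and> snd e \<in> U"
  shows "card (V - U) \<le> card (E - D)"
proof -
  have finE: "finite E" using finite_subset[OF EV] fin by blast
  define inner where "inner W = {e\<in>E - D. fst e \<in> W \<and> snd e \<in> W}" for W
  have finI: "finite (inner W)" for W using finE unfolding inner_def by auto
  obtain u0 where u0: "u0 \<in> U" using Une by auto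
  have main: "j \<le> card (V - U) \<Longrightarrow> \<exists>W. U \<subseteq> W \<and> W \<subseteq> V \<and> card (W - U) = j \<and> j \<le> card (inner W)" for j
  proof (induction j)
    case 0 then show ?case using UV by auto
  next
    case (Suc j)
    then obtain W where W: "U \<subseteq> W" "W \<subseteq> V" "card (W - U) = j" "j \<le> card (inner W)" by auto
    have "W \<noteq> V" using W(3) Suc.prems by auto
    then obtain x where x: "x \<in> V" "x \<notin> W" using W(2) by auto
    have "(u0, x) \<in> (E \<union> E\<inverse>)\<^sup>*" using conn u0 UV x by auto
    then obtain p q where pq: "(p,q) \<in> E \<union> E\<inverse>" "p \<in> W" "q \<notin> W"
      using cross_edge[of u0 x "E \<union> E\<inverse>" W] u0 W(1) x by blast
    define e where "e = (if (p,q) \<in> E then (p,q) else (q,p))"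
    have eE: "e \<in> E" using pq(1) unfolding e_def by auto
    have qV: "q \<in> V" using pq(1) EV by auto
    have ends: "{fst e, snd e} = {p, q}" unfolding e_def by auto
    have eD: "e \<notin> D" using DU ends pq(3) W(1) by (metis doubleton_eq_iff subsetD)
    define W' where "W' = insert q W"
    have "card (W' - U) = Suc j"
    proof -
      have "W' - U = insert q (W - U)" unfolding W'_def using pq(3) W(1) by auto
      moreover have "finite (W - U)" using finite_subset[OF W(2) fin] by auto
      ultimately show ?thesis using W(3) pq(3) by simp
    qed
    moreover have "insert e (inner W) \<subseteq> inner W'"
      using eE eD ends pq(2) W(1) unfolding inner_def W'_def by (auto simp: doubleton_eq_iff)
    moreover have "e \<notin> inner W" using ends pq(3) unfolding inner_def by (auto simp: doubleton_eq_iff)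
    ultimately have "Suc j \<le> card (inner W')"
      using card_mono[OF finI, of "insert e (inner W)" W'] finI[of W] W(4) by simp
    moreover have "U \<subseteq> W'" "W' \<subseteq> V" using W qV unfolding W'_def by auto
    ultimately show ?case using \<open>card (W' - U) = Suc j\<close> by blast
  qed
  obtain W where "card (V - U) \<le> card (inner W)" using main[of "card (V - U)"] by auto
  also have "card (inner W) \<le> card (E - D)"
    by (rule card_mono) (use finE in \<open>auto simp: inner_def\<close>)
  finally show ?thesis .
qed

lemma card_filter_sum: "finite A \<Longrightarrow> card {x\<in>A. P x} = (\<Sum>x\<in>A. if P x then 1 else 0)"
  by (simp add: sum.If_cases Int_def)

lemma handshake:
  assumes "finite D" "finite U" "\<forall>e\<in>D. fst e \<noteq> snd e \<and> fst e \<in> U \<and> snd e \<in> U"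
  shows "(\<Sum>v\<in>U. card (inc D v)) = 2 * card D"
proof -
  have "(\<Sum>v\<in>U. card (inc D v)) = (\<Sum>v\<in>U. \<Sum>e\<in>D. if v = fst e \<or> v = snd e then 1 else 0)"
    unfolding inc_def using assms(1) by (simp add: card_filter_sum)
  also have "\<dots> = (\<Sum>e\<in>D. \<Sum>v\<in>U. if v = fst e \<or> v = snd e then 1 else 0)" by (rule sum.swap)
  also have "\<dots> = (\<Sum>e\<in>D. card {v\<in>U. v = fst e \<or> v = snd e})"
    using assms(2) by (simp add: card_filter_sum)
  also have "\<dots> = (\<Sum>e\<in>D. 2)"
  proof (rule sum.cong)
    fix e assume "e \<in> D"
    then have "{v\<in>U. v = fst e \<or> v = snd e} = {fst e, snd e}" "fst e \<noteq> snd e" using assms(3) by auto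
    then show "card {v\<in>U. v = fst e \<or> v = snd e} = 2" by simp
  qed simp
  finally show ?thesis by simp
qed

lemma tree_values:
  fixes m :: "'v \<times> 'v \<Rightarrow> nat"
  assumes tree: "oriented_tree V E" and Vne: "V \<noteq> {}"
    and sol: "\<forall>v\<in>V. sum m (inc E v) = c"
    and eE: "e \<in> E"
  shows "m e = 0 \<or> m e = c"
proof (rule ccontr)
  assume ne: "\<not> (m e = 0 \<or> m e = c)"
  have fin: "finite V" and EV: "E \<subseteq> V \<times> V" and noloop: "\<forall>(s,t)\<in>E. s \<noteq> t"
    and conn: "\<forall>x\<in>V. \<forall>y\<in>V. (x,y) \<in> (E \<union> E\<inverse>)\<^sup>*" and cardE: "card E = card V - 1"
    using tree unfolding oriented_tree_def by auto
  have finE: "finite E" using finite_subset[OF EV] fin by blast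
  have le: "e' \<in> E \<Longrightarrow> m e' \<le> c" for e'
  proof -
    assume e': "e' \<in> E"
    then have v: "fst e' \<in> V" using EV by auto
    have "m e' \<le> sum m (inc E (fst e'))"
      by (rule member_le_sum) (use e' finE in \<open>auto simp: inc_def\<close>)
    then show ?thesis using sol v by auto
  qed
  define D where "D = {e\<in>E. 0 < m e \<and> m e < c}"
  define U where "U = {v\<in>V. \<exists>e\<in>D. v = fst e \<or> v = snd e}"
  have eD: "e \<in> D" using ne le[OF eE] eE unfolding D_def by auto
  have DE: "D \<subseteq> E" unfolding D_def by auto
  have finD: "finite D" using finite_subset[OF DE finE] .
  have UV: "U \<subseteq> V" unfolding U_def by auto
  have finU: "finite U" using finite_subset[OF UV fin] .
  have DU: "\<forall>e\<in>D. fst e \<noteq> snd e \<and> fst e \<in> U \<and> snd e \<in> U"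
    using DE EV noloop unfolding U_def by fastforce
  have deg: "2 \<le> card (inc D v)" if vU: "v \<in> U" for v
  proof -
    obtain e1 where e1: "e1 \<in> D" "v = fst e1 \<or> v = snd e1" using vU unfolding U_def by auto
    have vV: "v \<in> V" using vU UV by auto
    have e1i: "e1 \<in> inc E v" using e1 DE unfolding inc_def by auto
    have finI: "finite (inc E v)" using finE unfolding inc_def by auto
    have split: "sum m (inc E v) = m e1 + sum m (inc E v - {e1})"
      using sum.remove[OF finI e1i] .
    have "\<exists>e2\<in>inc E v - {e1}. e2 \<in> D"
    proof (rule ccontr)
      assume "\<not> ?thesis"
      then have out: "\<forall>e2\<in>inc E v - {e1}. m e2 = 0 \<or> c \<le> m e2" unfolding D_def inc_def by auto
      show False
      proof (cases "\<exists>e2\<in>inc E v - {e1}. c \<le> m e2")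
        case True
        then obtain e2 where e2: "e2 \<in> inc E v - {e1}" "c \<le> m e2" by auto
        have "m e2 \<le> sum m (inc E v - {e1})" by (rule member_le_sum) (use e2 finI in auto)
        then show False using split sol vV e1(1) e2(2) unfolding D_def by auto
      next
        case False
        then have "sum m (inc E v - {e1}) = 0" using out by (simp add: sum.neutral) 
        then show False using split sol vV e1(1) unfolding D_def by auto
      qed
    qed
    then obtain e2 where e2: "e2 \<in> inc E v - {e1}" "e2 \<in> D" by auto
    have "{e1, e2} \<subseteq> inc D v" using e1 e2 unfolding inc_def by auto
    moreover have "finite (inc D v)" using finD unfolding inc_def by auto
    ultimately have "card {e1, e2} \<le> card (inc D v)" by (rule card_mono[rotated])
    then show ?thesis using e2 by auto
  qed
  have "2 * card U = (\<Sum>v\<in>U. 2)" by simp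
  also have "\<dots> \<le> (\<Sum>v\<in>U. card (inc D v))" by (rule sum_mono) (use deg in auto)
  also have "\<dots> = 2 * card D" by (rule handshake[OF finD finU DU])
  finally have UD: "card U \<le> card D" by simp
  have Une: "U \<noteq> {}" using eD DE EV unfolding U_def by fastforce
  have cut: "card (V - U) \<le> card (E - D)"
    by (rule cut_count[OF fin EV conn UV Une DE]) (use DU in auto)
  have "card V = card U + card (V - U)" using card_Diff_subset[OF finU UV] card_mono[OF fin UV] by simp
  also have "\<dots> \<le> card D + card (E - D)" using UD cut by simp
  also have "\<dots> = card E" using card_Diff_subset[OF finD DE] card_mono[OF finE DE] by simp
  finally have "card V \<le> card E" .
  moreover have "0 < card V" using Vne fin by (simp add: card_gt_0_iff)
  ultimately show False using cardE by linarith
qed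



lemma tree_facts:
  assumes "oriented_tree V E"
  shows "finite V" "E \<subseteq> V \<times> V" "\<And>s t. (s,t) \<in> E \<Longrightarrow> s \<noteq> t" "finite E"
  using assms unfolding oriented_tree_def by (auto intro: finite_subset)

lemma M_facts:
  assumes tree: "oriented_tree V E" and pm: "schreier_perfect_matching V E n M" and ue: "(u,(s,t)) \<in> M"
  shows "u \<in> words V n" "(s,t) \<in> E" "s \<in> V" "t \<in> V" "s \<noteq> t" "act (s,t) u \<noteq> u"
    "u \<noteq> []" "hd u \<in> {s,t}" "act (s,t) u \<in> words V n"
proof -
  show u: "u \<in> words V n" and e: "(s,t) \<in> E" using pm ue unfolding schreier_perfect_matching_def schreier_edges_def by auto
  show s: "s \<in> V" and t: "t \<in> V" using e tree_facts(2)[OF tree] by auto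
  show st: "s \<noteq> t" using e tree_facts(3)[OF tree] by auto
  show na: "act (s,t) u \<noteq> u" using pm ue unfolding schreier_perfect_matching_def by fastforce
  show "u \<noteq> []" "hd u \<in> {s,t}" using na act_fix_iff[OF st] by auto
  show "act (s,t) u \<in> words V n" using act_words[OF u s t] .
qed

lemma words_hd_card:
  assumes "finite V" "v \<in> V" "n \<ge> 1"
  shows "card {w\<in>words V n. hd w = v} = card V ^ (n-1)"
proof -
  have "{w\<in>words V n. hd w = v} = (\<lambda>w. v # w) ` words V (n-1)"
  proof (intro set_eqI iffI)
    fix w assume "w \<in> {w\<in>words V n. hd w = v}"
    then show "w \<in> (\<lambda>w. v # w) ` words V (n-1)" using assms(3) unfolding words_def
      by (cases w) auto
  qed (use assms in \<open>auto simp: words_def\<close>)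
  then show ?thesis using words_card[OF assms(1)] by (simp add: card_image)
qed

lemma pm_solution:
  assumes tree: "oriented_tree V E" and n: "n \<ge> 1" and pm: "schreier_perfect_matching V E n M"
    and vV: "v \<in> V"
  shows "sum (\<lambda>e. card {ue\<in>M. snd ue = e}) (inc E v) = card V ^ (n-1)"
proof -
  note TF = tree_facts[OF tree]
  define Wv where "Wv = {w\<in>words V n. hd w = v}"
  have finW: "finite Wv" unfolding Wv_def using words_finite[OF TF(1)] by auto
  have MS: "M \<subseteq> words V n \<times> E" using pm unfolding schreier_perfect_matching_def schreier_edges_def by auto
  have finM: "finite M" using finite_subset[OF MS] words_finite[OF TF(1)] TF(4) by blast
  have "card Wv = (\<Sum>w\<in>Wv. card {ue\<in>M. w \<in> endpoints ue})"
    using pm unfolding schreier_perfect_matching_def Wv_def by simp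
  also have "\<dots> = (\<Sum>w\<in>Wv. \<Sum>ue\<in>M. if w \<in> endpoints ue then (1::nat) else 0)"
    using finM by (simp add: card_filter_sum)
  also have "\<dots> = (\<Sum>ue\<in>M. \<Sum>w\<in>Wv. if w \<in> endpoints ue then (1::nat) else 0)" by (rule sum.swap)
  also have "\<dots> = (\<Sum>ue\<in>M. if v = fst (snd ue) \<or> v = snd (snd ue) then (1::nat) else 0)"
  proof (rule sum.cong[OF refl])
    fix ue assume ueM: "ue \<in> M"
    obtain u s t where ue: "ue = (u,(s,t))" by (cases ue) auto
    note F = M_facts[OF tree pm ueM[unfolded ue]]
    have hda: "hd (act (s,t) u) = (if hd u = s then t else s)" using act_hd[OF F(7,8,5)] .
    have "(\<Sum>w\<in>Wv. if w \<in> endpoints ue then (1::nat) else 0) = card {w\<in>Wv. w \<in> endpoints ue}"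
      using finW by (simp add: card_filter_sum)
    also have "{w\<in>Wv. w \<in> endpoints ue} = (if v = s \<or> v = t then (if hd u = v then {u} else {act (s,t) u}) else {})"
      unfolding Wv_def endpoints_def ue using F hda by auto
    also have "card \<dots> = (if v = fst (snd ue) \<or> v = snd (snd ue) then (1::nat) else 0)" unfolding ue by simp
    finally show "(\<Sum>w\<in>Wv. if w \<in> endpoints ue then (1::nat) else 0) = (if v = fst (snd ue) \<or> v = snd (snd ue) then (1::nat) else 0)" .
  qed
  also have "\<dots> = card {ue\<in>M. v = fst (snd ue) \<or> v = snd (snd ue)}"
    using finM by (simp add: card_filter_sum)
  also have "{ue\<in>M. v = fst (snd ue) \<or> v = snd (snd ue)} = (\<Union>e\<in>inc E v. {ue\<in>M. snd ue = e})"
    using MS unfolding inc_def by auto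
  also have "card \<dots> = sum (\<lambda>e. card {ue\<in>M. snd ue = e}) (inc E v)"
    by (rule card_UN_disjoint) (use TF(4) finM in \<open>auto simp: inc_def\<close>)
  finally show ?thesis using words_hd_card[OF TF(1) vV n] unfolding Wv_def by simp
qed



lemma F_unique:
  assumes Fpm: "\<forall>v\<in>V. card (inc F v) = 1" and vV: "v \<in> V"
    and e1: "e1 \<in> F" "v = fst e1 \<or> v = snd e1" and e2: "e2 \<in> F" "v = fst e2 \<or> v = snd e2"
  shows "e1 = e2"
proof -
  obtain x where "inc F v = {x}" using Fpm vV card_1_singletonE by blast
  moreover have "e1 \<in> inc F v" "e2 \<in> inc F v" using e1 e2 unfolding inc_def by auto
  ultimately show ?thesis by auto
qed

lemma card_pair_filter: "a \<noteq> b \<Longrightarrow> card {x\<in>{a,b}. x \<in> M} = 1 \<longleftrightarrow> (a \<in> M \<longleftrightarrow> b \<notin> M)"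
proof -
  assume ab: "a \<noteq> b"
  have eq: "{x\<in>{a,b}. x \<in> M} = (if a \<in> M then {a} else {}) \<union> (if b \<in> M then {b} else {})" by auto
  show ?thesis unfolding eq using ab by (cases "a \<in> M"; cases "b \<in> M") auto
qed

lemma endpoints_set:
  assumes tree: "oriented_tree V E" and FE: "F \<subseteq> E" and Fpm: "\<forall>v\<in>V. card (inc F v) = 1"
    and Mprop: "\<forall>(u',e')\<in>M. e' \<in> F \<and> u' \<noteq> [] \<and> hd u' \<in> {fst e', snd e'}"
    and eF: "(s,t) \<in> F" and w: "w \<in> words V n" "w \<noteq> []" "hd w \<in> {s,t}" and u0: "act (s,t) u0 = w"
  shows "{ue\<in>M. w \<in> endpoints ue} = {x\<in>{(w,(s,t)),(u0,(s,t))}. x \<in> M}"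
proof (intro set_eqI iffI)
  fix ue assume ueX: "ue \<in> {ue\<in>M. w \<in> endpoints ue}"
  obtain u' s' t' where ue: "ue = (u',(s',t'))" by (cases ue) auto
  have P: "(s',t') \<in> F" "u' \<noteq> []" "hd u' \<in> {s',t'}" using Mprop ueX ue by auto
  have st': "s' \<noteq> t'" using P(1) FE tree_facts(3)[OF tree] by auto
  have wend: "w = u' \<or> w = act (s',t') u'" using ueX ue unfolding endpoints_def by auto
  have "hd w \<in> {s',t'}" using wend act_hd[OF P(2,3) st'] P(3) by auto
  moreover have hV: "hd w \<in> V" using w unfolding words_def by (cases w) auto
  ultimately have eq: "(s',t') = (s,t)" using F_unique[OF Fpm hV, of "(s',t')" "(s,t)"] P(1) eF w(3) by auto
  then have "u' = w \<or> u' = u0" using wend u0 act_inj[OF st'] by auto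
  then show "ue \<in> {x\<in>{(w,(s,t)),(u0,(s,t))}. x \<in> M}" using ueX ue eq by auto
next
  fix ue assume "ue \<in> {x\<in>{(w,(s,t)),(u0,(s,t))}. x \<in> M}"
  then show "ue \<in> {ue\<in>M. w \<in> endpoints ue}" using u0 unfolding endpoints_def by auto
qed

lemma fwd_alt:
  assumes tree: "oriented_tree V E" and FE: "F \<subseteq> E" and Fpm: "\<forall>v\<in>V. card (inc F v) = 1"
    and pm: "schreier_perfect_matching V E n M" and lab: "\<forall>ue\<in>M. snd ue \<in> F"
    and eF: "(s,t) \<in> F"
  shows "alt V n s t {u. (u,(s,t)) \<in> M}"
proof -
  have sV: "s \<in> V" "t \<in> V" and st: "s \<noteq> t" using eF FE tree_facts(2,3)[OF tree] by auto
  have Mprop: "\<forall>(u',e')\<in>M. e' \<in> F \<and> u' \<noteq> [] \<and> hd u' \<in> {fst e', snd e'}"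
    using M_facts(7,8)[OF tree pm] lab by fastforce
  have sub: "{u. (u,(s,t)) \<in> M} \<subseteq> Sset V n s t"
  proof
    fix u assume "u \<in> {u. (u,(s,t)) \<in> M}"
    then show "u \<in> Sset V n s t" using M_facts(1,7,8)[OF tree pm, of u s t] unfolding Sset_def by auto
  qed
  have "act (s,t) u \<in> {u. (u,(s,t)) \<in> M} \<longleftrightarrow> u \<notin> {u. (u,(s,t)) \<in> M}" if uS: "u \<in> Sset V n s t" for u
  proof -
    define w where "w = act (s,t) u"
    have wS: "w \<in> Sset V n s t" using S_act[OF uS sV st] unfolding w_def .
    then have w: "w \<in> words V n" "w \<noteq> []" "hd w \<in> {s,t}" unfolding Sset_def by auto
    have X: "{ue\<in>M. w \<in> endpoints ue} = {x\<in>{(w,(s,t)),(u,(s,t))}. x \<in> M}"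
      by (rule endpoints_set[OF tree FE Fpm Mprop eF w]) (simp add: w_def)
    have "card {ue\<in>M. w \<in> endpoints ue} = 1" using pm w(1) unfolding schreier_perfect_matching_def by auto
    moreover have "w \<noteq> u" using uS act_fix_iff[OF st, of u] unfolding w_def Sset_def by auto
    ultimately show ?thesis using card_pair_filter[of "(w,(s,t))" "(u,(s,t))" M] X unfolding w_def by auto
  qed
  then show ?thesis unfolding alt_def using sub by blast
qed

lemma bwd_pm:
  assumes tree: "oriented_tree V E" and FE: "F \<subseteq> E" and Fpm: "\<forall>v\<in>V. card (inc F v) = 1"
    and n: "n \<ge> 1"
    and Phi: "\<Phi> \<in> (\<Pi>\<^sub>E e\<in>F. {A. alt V n (fst e) (snd e) A})"
  shows "schreier_perfect_matching V E n {(u,e). e \<in> F \<and> u \<in> \<Phi> e}"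
proof -
  let ?M = "{(u,e). e \<in> F \<and> u \<in> \<Phi> e}"
  note TF = tree_facts[OF tree]
  have altF: "e \<in> F \<Longrightarrow> alt V n (fst e) (snd e) (\<Phi> e)" for e using Phi by auto
  have inS: "e \<in> F \<Longrightarrow> u \<in> \<Phi> e \<Longrightarrow> u \<in> Sset V n (fst e) (snd e)" for e u
    by (meson altF alt_def subsetD)
  have sub: "?M \<subseteq> schreier_edges V E n"
  proof
    fix x assume "x \<in> ?M"
    then obtain u e where x: "x = (u,e)" "e \<in> F" "u \<in> \<Phi> e" by blast
    have "u \<in> words V n" using inS[OF x(2,3)] unfolding Sset_def by blast
    moreover have "e \<in> E" using x(2) FE by blast
    ultimately show "x \<in> schreier_edges V E n" unfolding schreier_edges_def x(1) by blast
  qed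
  have noloop: "\<forall>ue\<in>?M. act (snd ue) (fst ue) \<noteq> fst ue"
  proof
    fix ue assume "ue \<in> ?M"
    then obtain u s t where ue: "ue = (u,(s,t))" "(s,t) \<in> F" "u \<in> \<Phi> (s,t)" by auto
    have st: "s \<noteq> t" using ue(2) FE TF(3) by auto
    have "u \<noteq> [] \<and> hd u \<in> {s,t}" using inS[OF ue(2,3)] unfolding Sset_def by simp
    then have "act (s,t) u \<noteq> u" using act_fix_iff[OF st, of u] by blast
    then show "act (snd ue) (fst ue) \<noteq> fst ue" using ue(1) by simp
  qed
  have Mprop: "\<forall>(u',e')\<in>?M. e' \<in> F \<and> u' \<noteq> [] \<and> hd u' \<in> {fst e', snd e'}"
  proof (rule ballI)
    fix x assume "x \<in> ?M"
    then obtain u e where x: "x = (u,e)" "e \<in> F" "u \<in> \<Phi> e" by blast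
    have "e \<in> F \<and> u \<noteq> [] \<and> hd u \<in> {fst e, snd e}" using inS[OF x(2,3)] x(2) unfolding Sset_def by blast
    then show "case x of (u',e') \<Rightarrow> e' \<in> F \<and> u' \<noteq> [] \<and> hd u' \<in> {fst e', snd e'}" using x(1) by simp
  qed
  have cardw: "card {ue\<in>?M. w \<in> endpoints ue} = 1" if w: "w \<in> words V n" for w
  proof -
    have wne: "w \<noteq> []" using w n unfolding words_def by auto
    have hV: "hd w \<in> V" using w wne unfolding words_def by (cases w) auto
    obtain e where "inc F (hd w) = {e}" using Fpm hV card_1_singletonE by blast
    then have eI: "e \<in> F" "hd w = fst e \<or> hd w = snd e" unfolding inc_def by auto
    obtain s t where est: "e = (s,t)" by (cases e)
    have eF: "(s,t) \<in> F" and hw: "hd w \<in> {s,t}" using eI est by auto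
    have sV: "s \<in> V" "t \<in> V" and st: "s \<noteq> t" using eF FE TF(2,3) by auto
    have wS: "w \<in> Sset V n s t" using w wne hw unfolding Sset_def by auto
    have im: "act (s,t) ` Sset V n s t \<subseteq> Sset V n s t" using S_act[OF _ sV st] by blast
    have ij: "inj_on (act (s,t)) (Sset V n s t)" by (meson act_inj[OF st] inj_onI)
    have "act (s,t) ` Sset V n s t = Sset V n s t"
      by (rule endo_inj_surj[OF S_finite[OF TF(1)] im ij])
    then have "w \<in> act (s,t) ` Sset V n s t" using wS by simp
    then obtain u0 where u0: "u0 \<in> Sset V n s t" "act (s,t) u0 = w" by (rule imageE) simp
    have X: "{ue\<in>?M. w \<in> endpoints ue} = {x\<in>{(w,(s,t)),(u0,(s,t))}. x \<in> ?M}"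
      by (rule endpoints_set[OF tree FE Fpm Mprop eF w wne hw u0(2)])
    have "u0 \<noteq> [] \<and> hd u0 \<in> {s,t}" using u0(1) unfolding Sset_def by simp
    then have "w \<noteq> u0" using act_fix_iff[OF st, of u0] u0(2) by blast
    moreover have "w \<in> \<Phi> (s,t) \<longleftrightarrow> u0 \<notin> \<Phi> (s,t)" using altF[OF eF] u0 unfolding alt_def by (metis fst_conv snd_conv)
    moreover have "(w,(s,t)) \<in> ?M \<longleftrightarrow> w \<in> \<Phi> (s,t)" "(u0,(s,t)) \<in> ?M \<longleftrightarrow> u0 \<in> \<Phi> (s,t)" using eF by auto
    ultimately show ?thesis unfolding X using card_pair_filter[of "(w,(s,t))" "(u0,(s,t))" ?M] by auto
  qed
  show ?thesis unfolding schreier_perfect_matching_def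
    by (intro conjI sub noloop ballI cardw)
qed

lemma count_lab:
  assumes tree: "oriented_tree V E" and FE: "F \<subseteq> E" and Fpm: "\<forall>v\<in>V. card (inc F v) = 1"
    and n: "n \<ge> 1"
  shows "card {M. schreier_perfect_matching V E n M \<and> (\<forall>ue\<in>M. snd ue \<in> F)}
       = card (\<Pi>\<^sub>E e\<in>F. {A. alt V n (fst e) (snd e) A})"
proof (rule bij_betw_same_card)
  let ?f = "\<lambda>M. (\<lambda>e\<in>F. {u. (u,e) \<in> M})"
  let ?g = "\<lambda>\<Phi>. {(u,e). e \<in> F \<and> u \<in> \<Phi> e}"
  show "bij_betw ?f {M. schreier_perfect_matching V E n M \<and> (\<forall>ue\<in>M. snd ue \<in> F)}
       (\<Pi>\<^sub>E e\<in>F. {A. alt V n (fst e) (snd e) A})"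
  proof (rule bij_betw_byWitness[where f'="?g"])
    show "\<forall>M\<in>{M. schreier_perfect_matching V E n M \<and> (\<forall>ue\<in>M. snd ue \<in> F)}. ?g (?f M) = M"
      by auto
    show "\<forall>\<Phi>\<in>(\<Pi>\<^sub>E e\<in>F. {A. alt V n (fst e) (snd e) A}). ?f (?g \<Phi>) = \<Phi>"
    proof
      fix \<Phi> assume P: "\<Phi> \<in> (\<Pi>\<^sub>E e\<in>F. {A. alt V n (fst e) (snd e) A})"
      show "?f (?g \<Phi>) = \<Phi>"
      proof
        fix e show "?f (?g \<Phi>) e = \<Phi> e" using P PiE_arb[OF P, of e] by (cases "e \<in> F") auto
      qed
    qed
    show "?f ` {M. schreier_perfect_matching V E n M \<and> (\<forall>ue\<in>M. snd ue \<in> F)} \<subseteq> (\<Pi>\<^sub>E e\<in>F. {A. alt V n (fst e) (snd e) A})"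
    proof clarify
      fix M assume pm: "schreier_perfect_matching V E n M" and lab: "\<forall>ue\<in>M. snd ue \<in> F"
      show "?f M \<in> (\<Pi>\<^sub>E e\<in>F. {A. alt V n (fst e) (snd e) A})"
      proof (rule PiE_I)
        fix e assume "e \<in> F"
        then show "?f M e \<in> {A. alt V n (fst e) (snd e) A}"
          using fwd_alt[OF tree FE Fpm pm lab, of "fst e" "snd e"] by simp
      qed simp
    qed
    show "?g ` (\<Pi>\<^sub>E e\<in>F. {A. alt V n (fst e) (snd e) A}) \<subseteq> {M. schreier_perfect_matching V E n M \<and> (\<forall>ue\<in>M. snd ue \<in> F)}"
      using bwd_pm[OF tree FE Fpm n] by auto
  qed
qed



theorem theorem3p4:
  fixes V :: "'v set" and E :: "('v \<times> 'v) set" and k n :: nat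
  assumes "oriented_tree V E"
    and "card V = k" and "k \<ge> 2" and "n \<ge> 1"
  shows "(tree_has_perfect_matching V E \<longrightarrow>
            real (card {M. schreier_perfect_matching V E n M}) =
              2 powr (real k / (2 * (real k - 1)) *
                      (real k ^ n - 2 * real k ^ (n - 1) + 1)))
       \<and> (\<not> tree_has_perfect_matching V E \<longrightarrow>
            {M. schreier_perfect_matching V E n M} = {})"
proof -
  note tree = assms(1)
  note TF = tree_facts[OF tree]
  define c where "c = k ^ (n-1)"
  have cpos: "c > 0" unfolding c_def using assms(3) by simp
  have Vne: "V \<noteq> {}" using assms(2,3) by auto
  define m where "m M e = card {ue\<in>M. snd ue = e}" for M :: "('v list \<times> ('v \<times> 'v)) set" and e
  have sol: "\<forall>v\<in>V. sum (m M) (inc E v) = c" if pm: "schreier_perfect_matching V E n M" for M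
    using pm_solution[OF tree assms(4) pm] assms(2) unfolding m_def c_def by simp
  have vals: "m M e = 0 \<or> m M e = c" if pm: "schreier_perfect_matching V E n M" and eE: "e \<in> E" for M e
    by (rule tree_values[OF tree Vne sol[OF pm] eE])
  have finM: "finite M" if pm: "schreier_perfect_matching V E n M" for M
  proof -
    have "M \<subseteq> words V n \<times> E" using pm unfolding schreier_perfect_matching_def schreier_edges_def by auto
    then show ?thesis using finite_subset words_finite[OF TF(1)] TF(4) by blast
  qed
  have MlabE: "snd ue \<in> E" if pm: "schreier_perfect_matching V E n M" and "ue \<in> M" for M ue
    using pm that(2) unfolding schreier_perfect_matching_def schreier_edges_def by auto
  have mpos: "m M (snd ue) > 0" if pm: "schreier_perfect_matching V E n M" and "ue \<in> M" for M ue
  proof -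
    have "ue \<in> {x\<in>M. snd x = snd ue}" using that(2) by simp
    then have "{x\<in>M. snd x = snd ue} \<noteq> {}" by blast
    moreover have "finite {x\<in>M. snd x = snd ue}" using finM[OF pm] by auto
    ultimately show ?thesis unfolding m_def by (simp add: card_gt_0_iff)
  qed
  have sumF: "sum (\<lambda>e. if e \<in> F then c' else 0) (inc E v) = c' * card (inc F v)" if FE: "F \<subseteq> E" for F v and c' :: nat
  proof -
    have "sum (\<lambda>e. if e \<in> F then c' else 0) (inc E v) = sum (\<lambda>e. c' * (if e \<in> F then 1 else 0)) (inc E v)"
      by (rule sum.cong) auto
    also have "\<dots> = c' * sum (\<lambda>e. if e \<in> F then 1 else 0) (inc E v)" by (simp add: sum_distrib_left)
    also have "\<dots> = c' * card {e\<in>inc E v. e \<in> F}"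
    proof -
      have fin: "finite (inc E v)" using TF(4) by (simp add: inc_def)
      show ?thesis using card_filter_sum[OF fin, of "\<lambda>e. e \<in> F"] by simp
    qed
    also have "{e\<in>inc E v. e \<in> F} = inc F v" using FE unfolding inc_def by auto
    finally show ?thesis .
  qed
  have part2: "\<not> tree_has_perfect_matching V E \<longrightarrow> {M. schreier_perfect_matching V E n M} = {}"
  proof (intro impI equals0I)
    fix M assume npm: "\<not> tree_has_perfect_matching V E" and "M \<in> {M. schreier_perfect_matching V E n M}"
    then have pm: "schreier_perfect_matching V E n M" by simp
    define F where "F = {e\<in>E. m M e = c}"
    have FE: "F \<subseteq> E" unfolding F_def by auto
    have "card (inc F v) = 1" if vV: "v \<in> V" for v
    proof -
      have "c = sum (m M) (inc E v)" using sol[OF pm] vV by simp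
      also have "\<dots> = sum (\<lambda>e. if e \<in> F then c else 0) (inc E v)"
        by (rule sum.cong[OF refl]) (use vals[OF pm] in \<open>auto simp: F_def inc_def\<close>)
      also have "\<dots> = c * card (inc F v)" by (rule sumF[OF FE])
      finally show ?thesis using cpos by simp
    qed
    then have "tree_has_perfect_matching V E" unfolding tree_has_perfect_matching_def inc_def using FE by blast
    then show False using npm by simp
  qed
  have part1: "tree_has_perfect_matching V E \<longrightarrow>
            real (card {M. schreier_perfect_matching V E n M}) =
              2 powr (real k / (2 * (real k - 1)) *
                      (real k ^ n - 2 * real k ^ (n - 1) + 1))"
  proof
    assume "tree_has_perfect_matching V E"
    then obtain F where FE: "F \<subseteq> E" and Fpm: "\<forall>v\<in>V. card (inc F v) = 1"
      unfolding tree_has_perfect_matching_def inc_def by blast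
    have finF: "finite F" using finite_subset[OF FE TF(4)] .
    have eV: "fst e \<in> V" "snd e \<in> V" "fst e \<noteq> snd e" if "e \<in> F" for e
    proof -
      obtain a b where ab: "e = (a,b)" by (cases e)
      then have "(a,b) \<in> E" using that FE by auto
      then show "fst e \<in> V" "snd e \<in> V" "fst e \<noteq> snd e" using ab TF(2,3) by auto
    qed
    have lab: "\<forall>ue\<in>M. snd ue \<in> F" if pm: "schreier_perfect_matching V E n M" for M
    proof
      fix ue assume ueM: "ue \<in> M"
      define e where "e = snd ue"
      have eE: "e \<in> E" using MlabE[OF pm ueM] unfolding e_def .
      define m' where "m' e = m M e + (if e \<in> F then c else 0)" for e
      have "\<forall>v\<in>V. sum m' (inc E v) = 2 * c"
      proof
        fix v assume vV: "v \<in> V"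
        have "sum m' (inc E v) = sum (m M) (inc E v) + sum (\<lambda>e. if e \<in> F then c else 0) (inc E v)"
          unfolding m'_def by (rule sum.distrib)
        also have "\<dots> = 2 * c" using sol[OF pm] vV sumF[OF FE, of c v] Fpm by simp
        finally show "sum m' (inc E v) = 2 * c" .
      qed
      then have "m' e = 0 \<or> m' e = 2 * c" by (rule tree_values[OF tree Vne _ eE])
      then show "snd ue \<in> F" using vals[OF pm eE] mpos[OF pm ueM] cpos unfolding m'_def e_def[symmetric]
        by (auto split: if_splits)
    qed
    have "{M. schreier_perfect_matching V E n M} = {M. schreier_perfect_matching V E n M \<and> (\<forall>ue\<in>M. snd ue \<in> F)}"
      using lab by auto
    then have "card {M. schreier_perfect_matching V E n M} = card (\<Pi>\<^sub>E e\<in>F. {A. alt V n (fst e) (snd e) A})"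
      using count_lab[OF tree FE Fpm assms(4)] by simp
    also have "\<dots> = (\<Prod>e\<in>F. card {A. alt V n (fst e) (snd e) A})" by (rule card_PiE[OF finF])
    also have "\<dots> = (\<Prod>e\<in>F. 2 ^ card (Fixw V (n-1) (fst e) (snd e)))"
    proof (rule prod.cong[OF refl])
      fix e assume eF: "e \<in> F"
      have sV: "fst e \<in> V" "snd e \<in> V" "fst e \<noteq> snd e" using eV[OF eF] by auto
      show "card {A. alt V n (fst e) (snd e) A} = 2 ^ card (Fixw V (n-1) (fst e) (snd e))"
        using alt_card[OF TF(1) sV] Rep_card[OF assms(4) sV(2)] by simp
    qed
    also have "\<dots> = 2 ^ (\<Sum>e\<in>F. card (Fixw V (n-1) (fst e) (snd e)))" by (simp add: power_sum)
    finally have cardeq: "card {M. schreier_perfect_matching V E n M} = 2 ^ (\<Sum>e\<in>F. card (Fixw V (n-1) (fst e) (snd e)))" .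
    define X where "X = (real k ^ n - 2 * real k ^ (n - 1) + 1) / (real k - 1)"
    have k1: "real k - 1 > 0" using assms(3) by simp
    have RX: "real (card (Fixw V (n-1) (fst e) (snd e))) = X" if eF: "e \<in> F" for e
    proof -
      have sV: "fst e \<in> V" "snd e \<in> V" "fst e \<noteq> snd e" using eV[OF eF] by auto
      have "real (card (Fixw V (n-1) (fst e) (snd e))) * (real k - 1) = real k ^ n - 2 * real k ^ (n-1) + 1"
        using Fixw_card_real[OF TF(1) sV, of "n-1"] assms(2,4) by simp
      then show ?thesis unfolding X_def using k1 by (simp add: field_simps)
    qed
    have hs: "(\<Sum>v\<in>V. card (inc F v)) = 2 * card F"
      by (rule handshake[OF finF TF(1)]) (use eV in blast)
    then have cF: "2 * card F = k" using Fpm assms(2) by simp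
    have "real (\<Sum>e\<in>F. card (Fixw V (n-1) (fst e) (snd e))) = (\<Sum>e\<in>F. X)"
      using RX by simp
    also have "\<dots> = real (card F) * X" by simp
    also have "\<dots> = real k / (2 * (real k - 1)) * (real k ^ n - 2 * real k ^ (n - 1) + 1)"
    proof -
      have cf: "real (card F) = real k / 2" using cF by linarith
      show ?thesis unfolding X_def cf using k1 by (simp add: field_simps)
    qed
    finally have Neq: "real (\<Sum>e\<in>F. card (Fixw V (n-1) (fst e) (snd e))) = real k / (2 * (real k - 1)) * (real k ^ n - 2 * real k ^ (n - 1) + 1)" .
    show "real (card {M. schreier_perfect_matching V E n M}) =
              2 powr (real k / (2 * (real k - 1)) * (real k ^ n - 2 * real k ^ (n - 1) + 1))"
    proof -
      define N where "N = (\<Sum>e\<in>F. card (Fixw V (n-1) (fst e) (snd e)))"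
      have "real (card {M. schreier_perfect_matching V E n M}) = (2::real) ^ N" unfolding cardeq N_def by simp
      also have "\<dots> = 2 powr real N" by (rule powr_realpow[symmetric]) simp
      finally show ?thesis using Neq unfolding N_def by simp
    qed
  qed
  show ?thesis using part1 part2 by blast
qed


end
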